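(* Suppose the positive sequences $\{\gamma_k\}$, $\{\lambda_k\}$ satisfy Assumption (A2), and let $\{x_k\}$ be generated by the IR-IG method. Then (a) $\lim_{k\to\infty}\|x_k-x_{\lambda_{k-1}}^*\|=0$; (b) if in addition $\lim_{k\to\infty}\lambda_k=0$, then $x_k\to x_h^*$.
   Context: Standing setup: $X\subset\mathbb{R}^n$ is nonempty, compact and convex. $f_1,\dots,f_m:\mathbb{R}^n\to\mathbb{R}$ are convex (possibly nondifferentiable) functions and $f=\sum_{i=1}^m f_i$. $h:\mathbb{R}^n\to\mathbb{R}$ is strongly convex with parameter $\mu_h>0$ (possibly nondifferentiable). Let $X^*=\arg\min_{x\in X}f(x)$ and let $x_h^*$ be the unique minimizer of $h$ over $X^*$. For $\lambda>0$, $x_\lambda^*$ denotes the unique minimizer of $f+\lambda h$ over $X$. $\mathcal{P}_X$ denotes Euclidean projection onto $X$. IR-IG method: given $x_0\in X$ and positive sequences $\{\gamma_k\}$, $\{\lambda_k\}$, for each $k\ge0$ set $x_{k,0}=x_k$; for $i=0,\dots,m-1$ pick any $g_{f_{i+1}}(x_{k,i})\in\partial f_{i+1}(x_{k,i})$ and $g_h(x_{k,i})\in\partial h(x_{k,i})$ and set $x_{k,i+1}=\mathcal{P}_X\big(x_{k,i}-\gamma_k\big(g_{f_{i+1}}(x_{k,i})+\tfrac{\lambda_k}{m}g_h(x_{k,i})\big)\big)$; then set $x_{k+1}=x_{k,m}$. Assumption (A2) on $\{\gamma_k\},\{\lambda_k\}$: (a) both are non-increasing positive sequences with $\gamma_0\lambda_0\le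 2m/\mu_h$; (b) $\sum_{k=0}^\infty\gamma_k\lambda_k=\infty$; (c) $\sum_{k=1}^\infty\frac{1}{\gamma_k\lambda_k}\left(\frac{\lambda_{k-1}}{\lambda_k}-1\right)^2<\infty$; (d) $\sum_{k=0}^\infty\gamma_k^2<\infty$; (e) $\lim_{k\to\infty}\frac{1}{\gamma_k^2\lambda_k^2}\left(\frac{\lambda_{k-1}}{\lambda_k}-1\right)^2=0$; (f) $\lim_{k\to\infty}\gamma_k/\lambda_k=0$. *)

theory Defs
  imports "HOL-Analysis.Analysis"
begin

definition subdiff :: "('a::real_inner \<Rightarrow> real) \<Rightarrow> 'a \<Rightarrow> 'a set" where
  "subdiff g x = {s. \<forall>y. g y \<ge> g x + inner s (y - x)}"

definition strongly_convex :: "real \<Rightarrow> ('a::real_normed_vector \<Rightarrow> real) \<Rightarrow> bool" where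
  "strongly_convex mu g \<longleftrightarrow> (\<forall>x y t. 0 \<le> t \<and> t \<le> 1 \<longrightarrow>
      g (t *\<^sub>R x + (1 - t) *\<^sub>R y) \<le> t * g x + (1 - t) * g y - mu / 2 * t * (1 - t) * (norm (x - y))\<^sup>2)"

definition argmin_set :: "('a \<Rightarrow> real) \<Rightarrow> 'a set \<Rightarrow> 'a set" where
  "argmin_set g S = {x \<in> S. \<forall>y\<in>S. g x \<le> g y}"

text \<open>The unique minimizer of g over S (meaningful when it exists and is unique).\<close>
definition the_argmin :: "('a \<Rightarrow> real) \<Rightarrow> 'a set \<Rightarrow> 'a" where
  "the_argmin g S = (THE x. x \<in> argmin_set g S)"

end

theory Submission
  imports Defs
begin



lemma seq_conv:
  fixes u a b :: "nat \<Rightarrow> real"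
  assumes u0: "\<And>k. u k \<ge> 0" and apos: "\<And>k. a k > 0" and ns: "\<not> summable a"
   and rec: "\<And>k. k \<ge> Ns \<Longrightarrow> a k \<le> 1 \<and> u (Suc k) \<le> (1 - a k) * u k + b k"
   and ba: "(\<lambda>k. b k / a k) \<longlonglongrightarrow> 0"
  shows "u \<longlonglongrightarrow> 0"
proof (rule LIMSEQ_I)
  fix r::real assume r: "r > 0"
  define e where "e = r/2"
  have e: "e > 0" using r by (simp add: e_def)
  from LIMSEQ_D[OF ba e] obtain N1 where N1: "\<And>k. k\<ge>N1 \<Longrightarrow> norm (b k / a k - 0) < e" by blast
  define N where "N = max Ns N1"
  define w where "w k = max (u k - e) 0" for k
  have w0: "w k \<ge> 0" for k by (simp add: w_def)
  have wstep: "w (Suc k) \<le> (1 - a k) * w k" if k: "k \<ge> N" for k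
  proof -
    have r1: "a k \<le> 1" "u (Suc k) \<le> (1 - a k) * u k + b k" using rec[of k] k by (auto simp: N_def)
    have "norm (b k / a k - 0) < e" using N1[of k] k by (auto simp: N_def)
    hence "\<bar>b k / a k\<bar> < e" by (simp only: real_norm_def diff_zero)
    hence "b k / a k < e" by (meson abs_ge_self le_less_trans)
    hence "b k < e * a k" using apos[of k] by (simp add: divide_less_eq)
    hence "u (Suc k) - e \<le> (1 - a k) * (u k - e)" using r1 by (simp add: algebra_simps)
    also have "\<dots> \<le> (1 - a k) * w k" using r1 by (intro mult_left_mono) (auto simp: w_def)
    finally show ?thesis using r1 w0[of k] by (simp add: w_def)
  qed
  define S where "S n = (\<Sum>j<n. a (N + j))" for n
  have wexp: "w (N + n) \<le> exp (- S n) * w N" for n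
  proof (induction n)
    case 0 thus ?case by (simp add: S_def)
  next
    case (Suc n)
    have "w (N + Suc n) \<le> (1 - a (N + n)) * w (N + n)" using wstep[of "N+n"] by simp
    also have "\<dots> \<le> exp (- a (N + n)) * w (N + n)"
      using exp_ge_add_one_self[of "- a (N + n)"] w0 by (intro mult_right_mono) auto
    also have "\<dots> \<le> exp (- a (N + n)) * (exp (- S n) * w N)" using Suc by (intro mult_left_mono) auto
    also have "\<dots> = exp (- S (Suc n)) * w N" by (simp add: S_def exp_add[symmetric] exp_diff exp_minus field_simps)
    finally show ?case .
  qed
  have ns2: "\<not> summable (\<lambda>j. a (N + j))"
    using ns summable_iff_shift[of a N] by (simp add: add.commute)
  obtain n0 where n0: "S n0 > w N / e"
  proof -
    have "\<not> (\<forall>n. S n \<le> w N / e)"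
    proof
      assume "\<forall>n. S n \<le> w N / e"
      hence "summable (\<lambda>j. a (N + j))"
        by (intro summableI_nonneg_bounded[where x="w N / e"]) (auto simp: S_def less_imp_le apos)
      with ns2 show False by simp
    qed
    thus ?thesis using that by (meson not_le)
  qed
  show "\<exists>no. \<forall>n\<ge>no. norm (u n - 0) < r"
  proof (intro exI allI impI)
    fix k assume k: "k \<ge> N + n0"
    define n where "n = k - N"
    have kn: "k = N + n" and nn: "n \<ge> n0" using k by (auto simp: n_def)
    have "S n0 \<le> S n" unfolding S_def using nn by (intro sum_mono2) (auto simp: less_imp_le apos)
    hence Sgt: "S n > w N / e" using n0 by simp
    have Spos: "S n \<ge> 0" unfolding S_def by (intro sum_nonneg) (auto simp: less_imp_le apos)
    have "exp (- S n) * (1 + S n) \<le> 1"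
      using exp_ge_add_one_self[of "S n"] by (simp add: exp_minus field_simps)
    have "w k * (1 + S n) \<le> exp (- S n) * w N * (1 + S n)"
      using wexp[of n] kn Spos by (intro mult_right_mono) auto
    also have "\<dots> = (exp (- S n) * (1 + S n)) * w N" by simp
    also have "\<dots> \<le> w N" using \<open>exp (- S n) * (1 + S n) \<le> 1\<close> w0[of N] using mult_right_mono[of "exp (- S n) * (1 + S n)" 1 "w N"] by simp
    also have "\<dots> < e * S n" using Sgt e by (simp add: divide_less_eq mult.commute)
    also have "\<dots> \<le> e * (1 + S n)" using e by simp
    finally have "w k < e" using Spos by simp
    hence "u k < 2 * e" by (simp add: w_def)
    thus "norm (u k - 0) < r" using u0[of k] by (simp add: e_def)
  qed
qed



lemma convex_bounds:
  fixes g :: "'a::euclidean_space \<Rightarrow> real"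
  assumes cvx: "convex_on UNIV g" and X: "compact X"
  shows "\<exists>L\<ge>0. (\<forall>a\<in>X. \<forall>b\<in>X. \<bar>g a - g b\<bar> \<le> L * norm (a - b)) \<and> (\<forall>x\<in>X. \<forall>s\<in>subdiff g x. norm s \<le> L)"
proof -
  have cont: "continuous_on UNIV g" using convex_on_continuous[OF open_UNIV cvx] .
  define K where "K = {x + u | x u. x \<in> X \<and> u \<in> cball (0::'a) 1}"
  have "compact K" unfolding K_def by (intro compact_sums X compact_cball)
  then have "compact (g ` K)" using compact_continuous_image continuous_on_subset[OF cont] by blast
  then have "bounded (g ` K)" by (rule compact_imp_bounded)
  then obtain M0 where M0: "\<forall>t\<in>g ` K. \<bar>t\<bar> \<le> M0" unfolding bounded_real by blast
  define M where "M = max M0 0"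
  have M: "\<bar>g y\<bar> \<le> M" if "y \<in> K" for y using M0 that by (force simp: M_def)
  have Mpos: "M \<ge> 0" by (simp add: M_def)
  have XK: "x \<in> K" if "x \<in> X" for x unfolding K_def using that by force
  have one: "g b - g a \<le> 2 * M * norm (a - b)" if a: "a \<in> X" and b: "b \<in> X" for a b
  proof -
    define r where "r = norm (a - b)"
    consider "r = 0" | "r \<ge> 1" | "0 < r" "r < 1" using norm_ge_zero[of "a - b"] unfolding r_def by linarith
    thus ?thesis
    proof cases
      case 1 thus ?thesis by (simp add: r_def)
    next
      case 2
      have "g b - g a \<le> 2 * M" using M[OF XK[OF a]] M[OF XK[OF b]] by linarith
      also have "\<dots> \<le> 2 * M * r" using 2 Mpos by (simp add: mult_le_cancel_left1)
      finally show ?thesis by (simp add: r_def)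
    next
      case 3
      define w where "w = a + (1/r) *\<^sub>R (b - a)"
      have "norm ((1/r) *\<^sub>R (b - a)) = 1" using 3 by (simp add: r_def norm_minus_commute)
      hence wK: "w \<in> K" unfolding K_def w_def using a by force
      have bw: "b = (1 - r) *\<^sub>R a + r *\<^sub>R w" using 3 by (simp add: w_def algebra_simps)
      have "g b \<le> (1 - r) * g a + r * g w"
        unfolding bw using 3 by (intro convex_onD[OF cvx]) auto
      hence "g b - g a \<le> r * (g w - g a)" by (simp add: algebra_simps)
      also have "\<dots> \<le> r * (2 * M)" using M[OF wK] M[OF XK[OF a]] 3
        by (intro mult_left_mono) auto
      finally show ?thesis by (simp add: r_def mult_ac)
    qed
  qed
  have sub: "norm s \<le> 2 * M" if x: "x \<in> X" and s: "s \<in> subdiff g x" for x s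
  proof (cases "s = 0")
    case True thus ?thesis using Mpos by simp
  next
    case False
    define y where "y = x + (1 / norm s) *\<^sub>R s"
    have yK: "y \<in> K" unfolding K_def y_def using x False by force
    have "g y \<ge> g x + inner s (y - x)" using s by (simp add: subdiff_def)
    moreover have "inner s (y - x) = norm s" using False
      by (simp add: y_def inner_scaleR_right power2_norm_eq_inner[symmetric] power2_eq_square)
    ultimately show ?thesis using M[OF yK] M[OF XK[OF x]] by linarith
  qed
  show ?thesis
  proof (intro exI[of _ "2 * M"] conjI ballI)
    show "0 \<le> 2 * M" using Mpos by simp
  next
    fix a b assume "a \<in> X" "b \<in> X"
    thus "\<bar>g a - g b\<bar> \<le> 2 * M * norm (a - b)"
      using one[of a b] one[of b a] by (simp add: norm_minus_commute abs_le_iff)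
  next
    fix x s assume "x \<in> X" "s \<in> subdiff g x" thus "norm s \<le> 2 * M" by (rule sub)
  qed
qed



lemma norm_sq_step:
  fixes a g :: "'a::real_inner"
  shows "(norm (a - t *\<^sub>R g))\<^sup>2 = (norm a)\<^sup>2 - 2 * t * inner g a + t\<^sup>2 * (norm g)\<^sup>2"
proof -
  have "(norm (a - t *\<^sub>R g))\<^sup>2 = inner (a - t *\<^sub>R g) (a - t *\<^sub>R g)" by (rule power2_norm_eq_inner)
  also have "\<dots> = inner a a - 2 * t * inner g a + t\<^sup>2 * inner g g"
    by (simp add: inner_diff_left inner_diff_right inner_commute power2_eq_square algebra_simps)
  finally show ?thesis by (simp add: power2_norm_eq_inner)
qed

lemma argmin_strong:
  fixes g :: "'a::euclidean_space \<Rightarrow> real"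
  assumes S: "S \<noteq> {}" "compact S" and cont: "continuous_on S g" and c: "c > 0"
   and mid: "\<And>x y. x\<in>S \<Longrightarrow> y\<in>S \<Longrightarrow> (1/2) *\<^sub>R (x + y) \<in> S \<and> g ((1/2) *\<^sub>R (x + y)) \<le> (g x + g y)/2 - c * (norm (x - y))\<^sup>2"
  shows "the_argmin g S \<in> S \<and> (\<forall>y\<in>S. g (the_argmin g S) + 2*c*(norm (y - the_argmin g S))\<^sup>2 \<le> g y)"
proof -
  obtain x0 where x0: "x0 \<in> S" "\<forall>y\<in>S. g x0 \<le> g y" using continuous_attains_inf[OF S(2,1) cont] by blast
  have strong: "g x0 + 2*c*(norm (y - x0))\<^sup>2 \<le> g y" if y: "y \<in> S" for y
  proof -
    have "g x0 \<le> g ((1/2) *\<^sub>R (x0 + y))" using x0 mid[OF x0(1) y] by blast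
    also have "\<dots> \<le> (g x0 + g y)/2 - c * (norm (x0 - y))\<^sup>2" using mid[OF x0(1) y] by blast
    finally have "g x0 \<le> (g x0 + g y)/2 - c * (norm (y - x0))\<^sup>2" by (simp add: norm_minus_commute)
    thus ?thesis by (simp add: field_simps)
  qed
  have "the_argmin g S = x0"
    unfolding the_argmin_def
  proof (rule the_equality)
    show "x0 \<in> argmin_set g S" using x0 by (simp add: argmin_set_def)
  next
    fix x1 assume "x1 \<in> argmin_set g S"
    hence x1: "x1 \<in> S" "g x1 \<le> g x0" using x0 by (auto simp: argmin_set_def)
    have "2*c*(norm (x1 - x0))\<^sup>2 \<le> 0" using strong[OF x1(1)] x1(2) by linarith
    hence "(norm (x1 - x0))\<^sup>2 \<le> 0" using c by (simp add: mult_le_0_iff)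
    thus "x1 = x0" by simp
  qed
  thus ?thesis using x0 strong by simp
qed

lemma tikhonov:
  fixes F h :: "'a::euclidean_space \<Rightarrow> real" and lam :: "nat \<Rightarrow> real" and ys :: "nat \<Rightarrow> 'a"
  assumes X: "compact X" and Fc: "continuous_on UNIV F" and hc: "continuous_on UNIV h"
   and ys: "\<And>k. ys k \<in> X \<and> (\<forall>y\<in>X. F (ys k) + lam k * h (ys k) \<le> F y + lam k * h y)"
   and lam0: "lam \<longlonglongrightarrow> 0" and lampos: "\<And>k. lam k > 0"
   and p: "p \<in> argmin_set F X" and pu: "\<And>q. q \<in> argmin_set F X \<Longrightarrow> h q \<le> h p \<Longrightarrow> q = p"
  shows "ys \<longlonglongrightarrow> p"
proof (rule ccontr)
  assume nc: "\<not> ys \<longlonglongrightarrow> p"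
  then obtain e where e: "e > 0" "\<not> eventually (\<lambda>k. dist (ys k) p < e) sequentially"
    unfolding tendsto_iff by blast
  hence "\<forall>N. \<exists>n\<ge>N. dist (ys n) p \<ge> e" unfolding eventually_sequentially by (meson not_le)
  hence "infinite {n. dist (ys n) p \<ge> e}" unfolding infinite_nat_iff_unbounded_le by blast
  from infinite_enumerate[OF this] obtain r :: "nat \<Rightarrow> nat"
    where r: "strict_mono r" "\<And>n. r n \<in> {n. dist (ys n) p \<ge> e}" by blast
  have "seq_compact X" using X by (rule compact_imp_seq_compact)
  moreover have "\<forall>n. (ys \<circ> r) n \<in> X" using ys by simp
  ultimately obtain l and s :: "nat \<Rightarrow> nat" where l: "l \<in> X" "strict_mono s" "((ys \<circ> r) \<circ> s) \<longlonglongrightarrow> l"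
    unfolding seq_compact_def by blast
  define t where "t = r \<circ> s"
  have t: "strict_mono t" using r(1) l(2) by (simp add: t_def strict_mono_o)
  have yt: "(\<lambda>n. ys (t n)) \<longlonglongrightarrow> l" using l(3) by (simp add: t_def comp_def)
  have lt: "(\<lambda>n. lam (t n)) \<longlonglongrightarrow> 0" using LIMSEQ_subseq_LIMSEQ[OF lam0 t] by (simp add: comp_def)
  have Fl: "(\<lambda>n. F (ys (t n))) \<longlonglongrightarrow> F l"
    using Fc yt by (intro isCont_tendsto_compose[OF _ yt]) (simp add: continuous_on_eq_continuous_at)
  have hl: "(\<lambda>n. h (ys (t n))) \<longlonglongrightarrow> h l"
    using hc yt by (intro isCont_tendsto_compose[OF _ yt]) (simp add: continuous_on_eq_continuous_at)
  have pX: "p \<in> X" "\<forall>y\<in>X. F p \<le> F y" using p by (auto simp: argmin_set_def)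
  have hle: "h (ys k) \<le> h p" for k
  proof -
    have "F (ys k) + lam k * h (ys k) \<le> F p + lam k * h p" using ys[of k] pX by blast
    moreover have "F p \<le> F (ys k)" using pX ys[of k] by blast
    ultimately have "lam k * h (ys k) \<le> lam k * h p" by linarith
    thus ?thesis using lampos[of k] by simp
  qed
  have "h l \<le> h p" using LIMSEQ_le_const2[OF hl] hle by blast
  moreover have "l \<in> argmin_set F X"
  proof -
    have "F l \<le> F y" if y: "y \<in> X" for y
    proof -
      have a1: "(\<lambda>n. F (ys (t n)) + lam (t n) * h (ys (t n))) \<longlonglongrightarrow> F l + 0 * h l"
        by (intro tendsto_intros Fl lt hl)
      have a2: "(\<lambda>n. F y + lam (t n) * h y) \<longlonglongrightarrow> F y + 0 * h y"
        by (intro tendsto_intros lt)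
      have "F l + 0 * h l \<le> F y + 0 * h y"
        using LIMSEQ_le[OF a1 a2] ys y by blast
      thus ?thesis by simp
    qed
    thus ?thesis using l(1) by (simp add: argmin_set_def)
  qed
  ultimately have "l = p" using pu by blast
  have dl: "(\<lambda>n. dist (ys (t n)) p) \<longlonglongrightarrow> dist l p" by (intro tendsto_intros yt)
  have "e \<le> dist l p"
    using LIMSEQ_le_const[OF dl] r(2) by (simp add: t_def)
  thus False using \<open>l = p\<close> e by simp
qed



lemma young: fixes al x y :: real assumes "al > 0" shows "2*x*y \<le> al/2*x\<^sup>2 + 2/al*y\<^sup>2"
proof -
  have "0 \<le> (al*x - 2*y)\<^sup>2" by simp
  hence "0 \<le> al\<^sup>2*x\<^sup>2 - 4*al*x*y + 4*y\<^sup>2" by (simp add: power2_eq_square algebra_simps)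
  hence "4*al*x*y \<le> al\<^sup>2*x\<^sup>2 + 4*y\<^sup>2" by linarith
  moreover have "(2*x*y) * (2*al) = 4*al*x*y" by simp
  moreover have "(al/2*x\<^sup>2 + 2/al*y\<^sup>2) * (2*al) = al\<^sup>2*x\<^sup>2 + 4*y\<^sup>2" using assms
    by (simp add: field_simps power2_eq_square)
  ultimately have "(2*x*y) * (2*al) \<le> (al/2*x\<^sup>2 + 2/al*y\<^sup>2) * (2*al)" by argo
  thus ?thesis using assms by (simp add: mult_le_cancel_right)
qed

lemma recur_alg: fixes al dd de Dr q v c :: real
  assumes "0<al" "al \<le> 1" "0 \<le> dd" "0 \<le> de" "de \<le> Dr" "q \<le> dd + de" "0 \<le> q" "v \<le> (1-al) * q\<^sup>2 + c"
  shows "v \<le> (1 - al/2) * dd\<^sup>2 + 3 * Dr\<^sup>2 / al + c"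
proof -
  have "q\<^sup>2 \<le> (dd + de)\<^sup>2" using assms by (intro power_mono) auto
  also have "\<dots> = dd\<^sup>2 + 2*dd*de + de\<^sup>2" by (simp add: power2_eq_square algebra_simps)
  also have "\<dots> \<le> dd\<^sup>2 + (al/2*dd\<^sup>2 + 2/al*de\<^sup>2) + de\<^sup>2" using young[OF assms(1), of dd de] by linarith
  finally have q2: "q\<^sup>2 \<le> (1 + al/2) * dd\<^sup>2 + (1 + 2/al) * de\<^sup>2" by (simp add: algebra_simps)
  have "(1-al) * q\<^sup>2 \<le> (1-al) * ((1 + al/2) * dd\<^sup>2 + (1 + 2/al) * de\<^sup>2)"
    using assms q2 by (intro mult_left_mono) auto
  also have "\<dots> = (1-al)*(1 + al/2) * dd\<^sup>2 + (1-al)*(1 + 2/al) * de\<^sup>2" by (simp add: algebra_simps)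
  also have "\<dots> \<le> (1 - al/2) * dd\<^sup>2 + (3/al) * Dr\<^sup>2"
  proof (rule add_mono)
    have "(1-al)*(1 + al/2) \<le> 1 - al/2" using assms by (simp add: algebra_simps power2_eq_square)
    thus "(1-al)*(1 + al/2) * dd\<^sup>2 \<le> (1 - al/2) * dd\<^sup>2" by (intro mult_right_mono) auto
  next
    have "1 \<le> 1/al" using assms by simp
    hence c1: "(1-al)*(1 + 2/al) \<le> 3/al" using assms by (simp add: field_simps)
    have c0: "0 \<le> 3/al" using assms by simp
    have "de\<^sup>2 \<le> Dr\<^sup>2" using assms by (intro power_mono) auto
    thus "(1-al)*(1 + 2/al) * de\<^sup>2 \<le> (3/al) * Dr\<^sup>2"
      using c1 c0 by (meson mult_mono zero_le_power2 order_trans mult_right_mono)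
  qed
  finally show ?thesis using assms by simp
qed

lemma drift_alg: fixes l1 l2 mu L n F1 F2 H1 H2 :: real
  assumes "l2 \<le> l1" "0 < l2" "0 < mu" "0 \<le> n" and Lpos: "0 \<le> L"
   and e1: "F1 + l1*H1 + 2*(l1*mu/8)*n\<^sup>2 \<le> F2 + l1*H2"
   and e2: "F2 + l2*H2 + 2*(l2*mu/8)*n\<^sup>2 \<le> F1 + l2*H1"
   and lip: "\<bar>H1 - H2\<bar> \<le> L*n"
  shows "n \<le> 4 * L / mu * (l1/l2 - 1)"
proof -
  have "(l1+l2)*mu/4*n\<^sup>2 \<le> (l1-l2)*(H2-H1)" using e1 e2 by (simp add: algebra_simps) argo
  also have "\<dots> \<le> (l1-l2)*(L*n)" using assms lip by (intro mult_left_mono) auto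
  finally have A: "(l1+l2)*mu/4*n\<^sup>2 \<le> (l1-l2)*(L*n)" .
  show ?thesis
  proof (cases "n = 0")
    case True
    have "0 \<le> l1/l2 - 1" using assms by (simp add: le_divide_eq)
    thus ?thesis using True Lpos assms by simp
  next
    case False
    hence np: "n > 0" using assms by simp
    have "l2*mu/4 \<le> (l1+l2)*mu/4" using assms by (simp add: field_simps)
    hence "l2*mu/4*n\<^sup>2 \<le> (l1+l2)*mu/4*n\<^sup>2" by (intro mult_right_mono) auto
    hence "l2*mu/4*n\<^sup>2 \<le> (l1-l2)*(L*n)" using A by linarith
    moreover have "(l2*mu/4*n)*n = l2*mu/4*n\<^sup>2" by (simp add: power2_eq_square)
    moreover have "((l1-l2)*L)*n = (l1-l2)*(L*n)" by simp
    ultimately have "(l2*mu/4*n)*n \<le> ((l1-l2)*L)*n" by argo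
    hence B: "l2*mu/4*n \<le> (l1-l2)*L" using np by simp
    have "n = (l2*mu/4*n) * (4/(l2*mu))" using assms by (simp add: field_simps)
    also have "\<dots> \<le> ((l1-l2)*L) * (4/(l2*mu))" using B assms by (intro mult_right_mono) auto
    also have "\<dots> = 4 * L / mu * (l1/l2 - 1)" using assms by (simp add: field_simps)
    finally show ?thesis .
  qed
qed

lemma contr_alg: fixes v B g l mu P Q C :: real
  assumes "0 < g" "v \<le> B - 2*g*(P - Q) + C" "Q + 2*(l*mu/8)*B \<le> P"
  shows "v \<le> (1 - g*l*mu/2)*B + C"
proof -
  have "l*mu/4*B \<le> P - Q" using assms by simp
  hence "g*(l*mu/4*B) \<le> g*(P - Q)" using assms by (intro mult_left_mono) auto
  thus ?thesis using assms by (simp add: algebra_simps)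
qed

lemma epoch_alg: fixes zn zo g pz py px G nd j m S X0 K :: real
  assumes "0 < g" "0 \<le> G" "zn \<le> zo - 2*g*(pz - py) + g\<^sup>2*G\<^sup>2"
   "\<bar>px - pz\<bar> \<le> G*nd" "nd \<le> j*g*G" "j \<le> m" "zo \<le> X0 - 2*g*S + j*g\<^sup>2*K"
   "K = G\<^sup>2 + 2*m*G\<^sup>2"
  shows "zn \<le> X0 - 2*g*(S + (px - py)) + (j+1)*g\<^sup>2*K"
proof -
  have "G*nd \<le> G*(j*g*G)" using assms by (intro mult_left_mono) auto
  also have "\<dots> \<le> G*(m*g*G)" using assms by (intro mult_left_mono mult_right_mono) auto
  finally have "px - pz \<le> m*g*G\<^sup>2" using assms by (simp add: power2_eq_square algebra_simps)
  hence "g*(px - pz) \<le> g*(m*g*G\<^sup>2)" using assms by (intro mult_left_mono) auto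
  thus ?thesis using assms by (simp add: algebra_simps power2_eq_square)
qed



theorem proposition1:
  fixes X :: "'a::euclidean_space set"
    and m :: nat
    and f :: "nat \<Rightarrow> 'a \<Rightarrow> real"
    and h :: "'a \<Rightarrow> real"
    and \<mu> :: real
    and gam lam :: "nat \<Rightarrow> real"
    and x :: "nat \<Rightarrow> 'a"
    and z :: "nat \<Rightarrow> nat \<Rightarrow> 'a"
    and gf gh :: "nat \<Rightarrow> nat \<Rightarrow> 'a"
  assumes X: "X \<noteq> {}" "compact X" "convex X"
    and m: "m \<ge> 1"
    and f_cvx: "\<And>i. i < m \<Longrightarrow> convex_on UNIV (f i)"
    and mu_pos: "\<mu> > 0"
    and h_sc: "strongly_convex \<mu> h"
    \<comment> \<open>Assumption (A2)\<close>
    and gamma_pos: "\<And>k. gam k > 0"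
    and lambda_pos: "\<And>k. lam k > 0"
    and gamma_mono: "decseq gam"
    and lambda_mono: "decseq lam"
    and A2a: "gam 0 * lam 0 \<le> 2 * real m / \<mu>"
    and A2b: "\<not> summable (\<lambda>k. gam k * lam k)"
    and A2c: "summable (\<lambda>k. 1 / (gam (Suc k) * lam (Suc k)) * (lam k / lam (Suc k) - 1)\<^sup>2)"
    and A2d: "summable (\<lambda>k. (gam k)\<^sup>2)"
    and A2e: "(\<lambda>k. 1 / ((gam (Suc k))\<^sup>2 * (lam (Suc k))\<^sup>2) * (lam k / lam (Suc k) - 1)\<^sup>2) \<longlonglongrightarrow> 0"
    and A2f: "(\<lambda>k. gam k / lam k) \<longlonglongrightarrow> 0"
    \<comment> \<open>IR-IG method; component f i here is f_{i+1} in the paper\<close>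
    and x0: "x 0 \<in> X"
    and z0: "\<And>k. z k 0 = x k"
    and gf: "\<And>k i. i < m \<Longrightarrow> gf k i \<in> subdiff (f i) (z k i)"
    and gh: "\<And>k i. i < m \<Longrightarrow> gh k i \<in> subdiff h (z k i)"
    and zstep: "\<And>k i. i < m \<Longrightarrow> z k (Suc i) =
        closest_point X (z k i - gam k *\<^sub>R (gf k i + (lam k / real m) *\<^sub>R gh k i))"
    and xstep: "\<And>k. x (Suc k) = z k m"
  shows "((\<lambda>k. norm (x k - the_argmin (\<lambda>y. (\<Sum>i<m. f i y) + lam (k - 1) * h y) X)) \<longlonglongrightarrow> 0)
         \<and> (lam \<longlonglongrightarrow> 0 \<longrightarrow>
              x \<longlonglongrightarrow> the_argmin h (argmin_set (\<lambda>y. \<Sum>i<m. f i y) X))"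
proof -
  define F where "F y = (\<Sum>i<m. f i y)" for y
  have closedX: "closed X" using X(2) compact_imp_closed by blast
  have mpos: "real m > 0" using m by simp
  have hcvx: "convex_on UNIV h"
  proof (rule convex_onI)
    fix t :: real and x y :: 'a assume t: "0 < t" "t < 1"
    have "h ((1-t) *\<^sub>R x + (1 - (1-t)) *\<^sub>R y) \<le> (1-t) * h x + (1 - (1-t)) * h y - \<mu>/2*(1-t)*(1-(1-t))*(norm (x-y))\<^sup>2"
      using h_sc[unfolded strongly_convex_def, rule_format, of "1-t" x y] t by simp
    moreover have "0 \<le> \<mu>/2*(1-t)*(1-(1-t))*(norm (x-y))\<^sup>2" using t mu_pos by simp
    ultimately show "h ((1 - t) *\<^sub>R x + t *\<^sub>R y) \<le> (1 - t) * h x + t * h y" by simp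
  qed simp
  have hmid: "h ((1/2) *\<^sub>R (x + y)) \<le> (h x + h y)/2 - \<mu>/8 * (norm (x - y))\<^sup>2" for x y
    using h_sc[unfolded strongly_convex_def, rule_format, of "1/2" x y] by (simp add: scaleR_add_right add_divide_distrib)
  have fmid: "f i ((1/2) *\<^sub>R (x + y)) \<le> (f i x + f i y)/2" if "i < m" for i x y
    using convex_onD[OF f_cvx[OF that], of "1/2" x y] by (simp add: scaleR_add_right add_divide_distrib)
  have Fmid: "F ((1/2) *\<^sub>R (x + y)) \<le> (F x + F y)/2" for x y
  proof -
    have "F ((1/2) *\<^sub>R (x + y)) \<le> (\<Sum>i<m. (f i x + f i y)/2)"
      unfolding F_def by (intro sum_mono fmid) auto
    also have "\<dots> = (F x + F y)/2" by (simp only: F_def sum_divide_distrib[symmetric] sum.distrib)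
    finally show ?thesis .
  qed
  have fcont: "continuous_on UNIV (f i)" if "i < m" for i
    using convex_on_continuous[OF open_UNIV f_cvx[OF that]] .
  have hcont: "continuous_on UNIV h" using convex_on_continuous[OF open_UNIV hcvx] .
  have Fcont: "continuous_on UNIV F" unfolding F_def[abs_def]
    by (intro continuous_on_sum) (use fcont in auto)
  have midX: "(1/2) *\<^sub>R (x + y) \<in> X" if "x \<in> X" "y \<in> X" for x y
    using convexD[OF X(3) that, of "1/2" "1/2"] by (simp add: scaleR_add_right add_divide_distrib)
  define ys where "ys k = the_argmin (\<lambda>y. (\<Sum>i<m. f i y) + lam k * h y) X" for k
  have ysP: "ys k \<in> X \<and> (\<forall>y\<in>X. (F (ys k) + lam k * h (ys k)) + 2*(lam k * \<mu>/8)*(norm (y - ys k))\<^sup>2 \<le> F y + lam k * h y)" for k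
  proof -
    have eq: "ys k = the_argmin (\<lambda>y. F y + lam k * h y) X" by (simp add: ys_def F_def)
    have "the_argmin (\<lambda>y. F y + lam k * h y) X \<in> X \<and> (\<forall>y\<in>X. (\<lambda>y. F y + lam k * h y) (the_argmin (\<lambda>y. F y + lam k * h y) X) + 2*(lam k * \<mu>/8)*(norm (y - the_argmin (\<lambda>y. F y + lam k * h y) X))\<^sup>2 \<le> (\<lambda>y. F y + lam k * h y) y)"
    proof (rule argmin_strong)
      show "X \<noteq> {}" "compact X" using X by auto
      show "continuous_on X (\<lambda>y. F y + lam k * h y)"
        by (intro continuous_on_add continuous_on_mult continuous_on_const continuous_on_subset[OF Fcont] continuous_on_subset[OF hcont]) auto
      show "0 < lam k * \<mu> / 8" using lambda_pos[of k] mu_pos by simp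
    next
      fix x y assume xy: "x \<in> X" "y \<in> X"
      have "lam k * h ((1/2) *\<^sub>R (x + y)) \<le> lam k * ((h x + h y)/2 - \<mu>/8 * (norm (x - y))\<^sup>2)"
        using hmid lambda_pos[of k] by (intro mult_left_mono) (auto simp: less_imp_le)
      thus "(1/2) *\<^sub>R (x + y) \<in> X \<and> F ((1/2) *\<^sub>R (x + y)) + lam k * h ((1/2) *\<^sub>R (x + y)) \<le> (F x + lam k * h x + (F y + lam k * h y)) / 2 - lam k * \<mu> / 8 * (norm (x - y))\<^sup>2"
        using Fmid[of x y] midX[OF xy] by (simp add: algebra_simps)
    qed
    thus ?thesis unfolding eq by simp
  qed
  obtain xm where xm: "xm \<in> X" "\<forall>y\<in>X. F xm \<le> F y"
    using continuous_attains_inf[OF X(2,1) continuous_on_subset[OF Fcont]] by blast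
  define Xs where "Xs = argmin_set F X"
  have Xs_eq: "Xs = X \<inter> {y. F y \<le> F xm}"
    using xm by (auto simp: Xs_def argmin_set_def intro: order_trans)
  have Xs_c: "compact Xs" unfolding Xs_eq
    by (intro compact_Int_closed X(2) closed_Collect_le Fcont continuous_on_const)
  have Xs_ne: "Xs \<noteq> {}" using xm by (auto simp: Xs_eq)
  define p where "p = the_argmin h Xs"
  have pP: "p \<in> Xs \<and> (\<forall>y\<in>Xs. h p + 2*(\<mu>/8)*(norm (y - p))\<^sup>2 \<le> h y)"
    unfolding p_def
  proof (rule argmin_strong[OF Xs_ne Xs_c continuous_on_subset[OF hcont]])
    show "0 < \<mu>/8" using mu_pos by simp
  next
    fix x y assume xy: "x \<in> Xs" "y \<in> Xs"
    have "(1/2) *\<^sub>R (x + y) \<in> Xs" using xy midX Fmid[of x y] unfolding Xs_eq by fastforce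
    thus "(1/2) *\<^sub>R (x + y) \<in> Xs \<and> h ((1/2) *\<^sub>R (x + y)) \<le> (h x + h y)/2 - \<mu>/8 * (norm (x - y))\<^sup>2"
      using hmid by blast
  qed auto
  have xX: "x k \<in> X" for k
  proof (cases k)
    case 0 thus ?thesis using x0 by simp
  next
    case (Suc j)
    have mm: "m - 1 < m" "Suc (m - 1) = m" using m by auto
    have "z j m = closest_point X (z j (m-1) - gam j *\<^sub>R (gf j (m-1) + (lam j / real m) *\<^sub>R gh j (m-1)))"
      using zstep[OF mm(1), of j] mm(2) by simp
    thus ?thesis using Suc xstep closest_point_in_set[OF closedX X(1)] by simp
  qed
  have zX: "z k i \<in> X" if "i \<le> m" for k i
  proof (cases i)
    case 0 thus ?thesis using xX z0 by simp
  next
    case (Suc j)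
    have "j < m" using that Suc by simp
    hence "z k i = closest_point X (z k j - gam k *\<^sub>R (gf k j + (lam k / real m) *\<^sub>R gh k j))"
      using zstep[of j k] Suc by simp
    thus ?thesis using closest_point_in_set[OF closedX X(1)] by simp
  qed
  define P where "P i L \<longleftrightarrow> L \<ge> 0 \<and> (\<forall>a\<in>X. \<forall>b\<in>X. \<bar>f i a - f i b\<bar> \<le> L * norm (a - b)) \<and> (\<forall>x\<in>X. \<forall>s\<in>subdiff (f i) x. norm s \<le> L)" for i L
  have exL: "\<exists>L. P i L" if "i < m" for i
    unfolding P_def by (rule convex_bounds[OF f_cvx[OF that] X(2)])
  define Lf where "Lf i = (SOME L. P i L)" for i
  have Lf: "Lf i \<ge> 0 \<and> (\<forall>a\<in>X. \<forall>b\<in>X. \<bar>f i a - f i b\<bar> \<le> Lf i * norm (a - b)) \<and> (\<forall>x\<in>X. \<forall>s\<in>subdiff (f i) x. norm s \<le> Lf i)" if "i < m" for i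
    using someI_ex[OF exL[OF that]] unfolding Lf_def P_def .
  obtain Lh where Lh: "Lh \<ge> 0" "\<forall>a\<in>X. \<forall>b\<in>X. \<bar>h a - h b\<bar> \<le> Lh * norm (a - b)" "\<forall>x\<in>X. \<forall>s\<in>subdiff h x. norm s \<le> Lh"
    using convex_bounds[OF hcvx X(2)] by blast
  have Lf0: "i < m \<Longrightarrow> 0 \<le> Lf i" for i using Lf by blast
  define LF where "LF = (\<Sum>i<m. Lf i)"
  have Lf_le: "Lf i \<le> LF" if "i < m" for i
    unfolding LF_def using that Lf0 by (intro member_le_sum) auto
  define G where "G = LF + lam 0 * Lh"
  have LF0: "LF \<ge> 0" unfolding LF_def using Lf0 by (intro sum_nonneg) simp
  have G0: "G \<ge> 0" unfolding G_def using LF0 Lh(1) lambda_pos[of 0] by simp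
  have lam_le: "lam k \<le> lam 0" for k using lambda_mono by (simp add: decseq_def)
  have cm: "lam k / real m \<le> lam 0" "0 \<le> lam k / real m" for k
  proof -
    have "lam k / real m \<le> lam k" using m lambda_pos[of k] by (simp add: divide_le_eq)
    thus "lam k / real m \<le> lam 0" using lam_le[of k] by simp
    show "0 \<le> lam k / real m" using lambda_pos[of k] by simp
  qed
  define g where "g k i = gf k i + (lam k / real m) *\<^sub>R gh k i" for k i
  define phi where "phi k i y = f i y + (lam k / real m) * h y" for k i y
  have gbound: "norm (g k i) \<le> G" if i: "i < m" for k i
  proof -
    have "norm (g k i) \<le> norm (gf k i) + norm ((lam k / real m) *\<^sub>R gh k i)"
      unfolding g_def by (rule norm_triangle_ineq)
    also have "norm ((lam k / real m) *\<^sub>R gh k i) = (lam k / real m) * norm (gh k i)"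
      using cm[of k] lambda_pos[of k] by simp
    also have "norm (gf k i) + (lam k / real m) * norm (gh k i) \<le> Lf i + lam 0 * Lh"
    proof (rule add_mono)
      show "norm (gf k i) \<le> Lf i" using Lf[OF i] gf[OF i] zX[of i k] i by simp
      have "norm (gh k i) \<le> Lh" using Lh(3) gh[OF i] zX[of i k] i by simp
      thus "(lam k / real m) * norm (gh k i) \<le> lam 0 * Lh"
        using cm[of k] Lh(1) by (intro mult_mono) auto
    qed
    also have "\<dots> \<le> G" using Lf_le[OF i] by (simp add: G_def)
    finally show ?thesis .
  qed
  have philip: "\<bar>phi k i a - phi k i b\<bar> \<le> G * norm (a - b)" if i: "i < m" and ab: "a \<in> X" "b \<in> X" for k i a b
  proof -
    have e: "phi k i a - phi k i b = (f i a - f i b) + (lam k / real m) * (h a - h b)"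
      unfolding phi_def by (simp add: right_diff_distrib)
    have "\<bar>phi k i a - phi k i b\<bar> \<le> \<bar>f i a - f i b\<bar> + \<bar>(lam k / real m) * (h a - h b)\<bar>"
      unfolding e by (rule abs_triangle_ineq)
    also have "\<bar>(lam k / real m) * (h a - h b)\<bar> = (lam k / real m) * \<bar>h a - h b\<bar>"
      using cm[of k] lambda_pos[of k] by (simp add: abs_mult)
    also have "\<bar>f i a - f i b\<bar> + (lam k / real m) * \<bar>h a - h b\<bar> \<le> Lf i * norm (a - b) + lam 0 * (Lh * norm (a - b))"
    proof (rule add_mono)
      show "\<bar>f i a - f i b\<bar> \<le> Lf i * norm (a - b)" using Lf[OF i] ab by blast
      show "(lam k / real m) * \<bar>h a - h b\<bar> \<le> lam 0 * (Lh * norm (a - b))"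
        using cm[of k] Lh(2) ab lambda_pos[of 0] by (intro mult_mono) auto
    qed
    also have "\<dots> \<le> G * norm (a - b)" using Lf_le[OF i] unfolding G_def
      by (simp add: algebra_simps mult_right_mono)
    finally show ?thesis .
  qed
  have phisub: "phi k i y \<ge> phi k i (z k i) + inner (g k i) (y - z k i)" if i: "i < m" for k i y
  proof -
    have a1: "f i y \<ge> f i (z k i) + inner (gf k i) (y - z k i)" using gf[OF i] by (simp add: subdiff_def)
    have a2: "h y \<ge> h (z k i) + inner (gh k i) (y - z k i)" using gh[OF i] by (simp add: subdiff_def)
    have "(lam k / real m) * h y \<ge> (lam k / real m) * (h (z k i) + inner (gh k i) (y - z k i))"
      using a2 cm[of k] by (intro mult_left_mono) auto
    thus ?thesis using a1 unfolding phi_def g_def by (simp add: inner_add_left algebra_simps)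
  qed
  have phisum: "(\<Sum>i<m. phi k i y) = F y + lam k * h y" for k y
    unfolding phi_def F_def using mpos by (simp add: sum.distrib)
  have zstep_le: "(norm (z k (Suc i) - y))\<^sup>2 \<le> (norm (z k i - y))\<^sup>2 - 2*gam k*(phi k i (z k i) - phi k i y) + (gam k)\<^sup>2*G\<^sup>2"
    if i: "i < m" and y: "y \<in> X" for k i y
  proof -
    have zs: "z k (Suc i) = closest_point X (z k i - gam k *\<^sub>R g k i)"
      unfolding g_def by (rule zstep[OF i])
    have "norm (z k (Suc i) - y) = dist (closest_point X (z k i - gam k *\<^sub>R g k i)) (closest_point X y)"
      using zs closest_point_self[OF y] by (simp add: dist_norm)
    also have "\<dots> \<le> dist (z k i - gam k *\<^sub>R g k i) y" by (rule closest_point_lipschitz[OF X(3) closedX X(1)])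
    also have "\<dots> = norm ((z k i - y) - gam k *\<^sub>R g k i)" by (simp add: dist_norm algebra_simps)
    finally have n1: "norm (z k (Suc i) - y) \<le> norm ((z k i - y) - gam k *\<^sub>R g k i)" .
    have "(norm (z k (Suc i) - y))\<^sup>2 \<le> (norm ((z k i - y) - gam k *\<^sub>R g k i))\<^sup>2"
      using n1 by (intro power_mono) auto
    also have "\<dots> = (norm (z k i - y))\<^sup>2 - 2 * gam k * inner (g k i) (z k i - y) + (gam k)\<^sup>2 * (norm (g k i))\<^sup>2"
      by (rule norm_sq_step)
    also have "\<dots> \<le> (norm (z k i - y))\<^sup>2 - 2*gam k*(phi k i (z k i) - phi k i y) + (gam k)\<^sup>2*G\<^sup>2"
    proof -
      have ps: "phi k i y \<ge> phi k i (z k i) + inner (g k i) (y - z k i)" by (rule phisub[OF i])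
      have "inner (g k i) (y - z k i) = - inner (g k i) (z k i - y)" by (simp add: inner_diff_right)
      hence "phi k i (z k i) - phi k i y \<le> inner (g k i) (z k i - y)" using ps by linarith
      hence A: "2*gam k*(phi k i (z k i) - phi k i y) \<le> 2*gam k*inner (g k i) (z k i - y)"
        using gamma_pos[of k] by (intro mult_left_mono) auto
      have "(norm (g k i))\<^sup>2 \<le> G\<^sup>2" using gbound[OF i] by (intro power_mono) auto
      hence B: "(gam k)\<^sup>2 * (norm (g k i))\<^sup>2 \<le> (gam k)\<^sup>2 * G\<^sup>2" by (intro mult_left_mono) auto
      show ?thesis using A B by linarith
    qed
    finally show ?thesis .
  qed
  have zd: "i \<le> m \<Longrightarrow> norm (z k i - x k) \<le> real i * gam k * G" for k i
  proof (induction i)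
    case 0 thus ?case using z0 by simp
  next
    case (Suc i)
    hence i: "i < m" by simp
    have zi: "z k i \<in> X" using zX[of i k] i by simp
    have zs: "z k (Suc i) = closest_point X (z k i - gam k *\<^sub>R g k i)"
      unfolding g_def by (rule zstep[OF i])
    have "norm (z k (Suc i) - z k i) = dist (closest_point X (z k i - gam k *\<^sub>R g k i)) (closest_point X (z k i))"
      using zs closest_point_self[OF zi] by (simp add: dist_norm)
    also have "\<dots> \<le> dist (z k i - gam k *\<^sub>R g k i) (z k i)" by (rule closest_point_lipschitz[OF X(3) closedX X(1)])
    also have "\<dots> = gam k * norm (g k i)" using gamma_pos[of k] by (simp add: dist_norm)
    also have "\<dots> \<le> gam k * G" using gbound[OF i] gamma_pos[of k] by (intro mult_left_mono) auto
    finally have s1: "norm (z k (Suc i) - z k i) \<le> gam k * G" .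
    have "norm (z k (Suc i) - x k) \<le> norm (z k (Suc i) - z k i) + norm (z k i - x k)"
      using norm_triangle_ineq[of "z k (Suc i) - z k i" "z k i - x k"] by simp
    also have "\<dots> \<le> gam k * G + real i * gam k * G" using s1 Suc by simp
    also have "\<dots> = real (Suc i) * gam k * G" by (simp add: algebra_simps)
    finally show ?case .
  qed
  define K where "K = G\<^sup>2 + 2 * real m * G\<^sup>2"
  define C where "C = real m * K"
  have C0: "C \<ge> 0" by (simp add: C_def K_def)
  have epoch: "(norm (x (Suc k) - y))\<^sup>2 \<le> (norm (x k - y))\<^sup>2 - 2*gam k*((F (x k) + lam k * h (x k)) - (F y + lam k * h y)) + C * (gam k)\<^sup>2"
    if y: "y \<in> X" for k y
  proof -
    have ind: "j \<le> m \<Longrightarrow> (norm (z k j - y))\<^sup>2 \<le> (norm (x k - y))\<^sup>2 - 2*gam k*(\<Sum>i<j. phi k i (x k) - phi k i y) + real j * (gam k)\<^sup>2 * K" for j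
    proof (induction j)
      case 0 thus ?case using z0 by simp
    next
      case (Suc j)
      hence j: "j < m" by simp
      have IH: "(norm (z k j - y))\<^sup>2 \<le> (norm (x k - y))\<^sup>2 - 2*gam k*(\<Sum>i<j. phi k i (x k) - phi k i y) + real j * (gam k)\<^sup>2 * K"
        using Suc by simp
      have zj: "z k j \<in> X" using zX[of j k] j by simp
      have lip: "\<bar>phi k j (x k) - phi k j (z k j)\<bar> \<le> G * norm (x k - z k j)"
        by (rule philip[OF j xX zj])
      have dj: "norm (x k - z k j) \<le> real j * gam k * G"
        using zd[of j k] j by (simp add: norm_minus_commute)
      have H: "(norm (z k (Suc j) - y))\<^sup>2 \<le> (norm (x k - y))\<^sup>2 - 2*gam k*((\<Sum>i<j. phi k i (x k) - phi k i y) + (phi k j (x k) - phi k j y)) + (real j + 1) * (gam k)\<^sup>2 * K"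
        by (rule epoch_alg[OF gamma_pos[of k] G0 zstep_le[OF j y] lip dj _ IH K_def]) (use j in simp)
      show ?case using H by (simp add: add.commute)
    qed
    have "(norm (z k m - y))\<^sup>2 \<le> (norm (x k - y))\<^sup>2 - 2*gam k*(\<Sum>i<m. phi k i (x k) - phi k i y) + real m * (gam k)\<^sup>2 * K"
      by (rule ind) simp
    moreover have "(\<Sum>i<m. phi k i (x k) - phi k i y) = (F (x k) + lam k * h (x k)) - (F y + lam k * h y)"
      by (simp add: sum_subtractf phisum)
    moreover have "real m * (gam k)\<^sup>2 * K = C * (gam k)\<^sup>2" by (simp add: C_def)
    ultimately show ?thesis using xstep[of k] by simp
  qed
  define d where "d k = norm (x (Suc k) - ys k)" for k
  define bq where "bq k = norm (x k - ys k)" for k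
  have contr: "(d k)\<^sup>2 \<le> (1 - gam k * lam k * \<mu> / 2) * (bq k)\<^sup>2 + C * (gam k)\<^sup>2" for k
  proof (rule contr_alg[where P = "F (x k) + lam k * h (x k)" and Q = "F (ys k) + lam k * h (ys k)"])
    show "0 < gam k" by (rule gamma_pos)
    show "(d k)\<^sup>2 \<le> (bq k)\<^sup>2 - 2 * gam k * (F (x k) + lam k * h (x k) - (F (ys k) + lam k * h (ys k))) + C * (gam k)\<^sup>2"
      unfolding d_def bq_def using epoch[of "ys k" k] ysP[of k] by blast
    show "F (ys k) + lam k * h (ys k) + 2 * (lam k * \<mu> / 8) * (bq k)\<^sup>2 \<le> F (x k) + lam k * h (x k)"
      unfolding bq_def using ysP[of k] xX[of k] by (simp add: norm_minus_commute)
  qed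
  define D where "D = 4 * Lh / \<mu>"
  have D0: "D \<ge> 0" using Lh(1) mu_pos by (simp add: D_def)
  have lamS: "lam (Suc k) \<le> lam k" for k using lambda_mono by (simp add: decseq_Suc_iff)
  have drift: "norm (ys k - ys (Suc k)) \<le> D * (lam k / lam (Suc k) - 1)" for k
  proof -
    have y1: "ys k \<in> X" and y2: "ys (Suc k) \<in> X" using ysP by auto
    have e1: "F (ys k) + lam k * h (ys k) + 2 * (lam k * \<mu> / 8) * (norm (ys (Suc k) - ys k))\<^sup>2 \<le> F (ys (Suc k)) + lam k * h (ys (Suc k))"
      using ysP[of k] y2 by blast
    have e2: "F (ys (Suc k)) + lam (Suc k) * h (ys (Suc k)) + 2 * (lam (Suc k) * \<mu> / 8) * (norm (ys (Suc k) - ys k))\<^sup>2 \<le> F (ys k) + lam (Suc k) * h (ys k)"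
      using ysP[of "Suc k"] y1 by (simp add: norm_minus_commute)
    have lip: "\<bar>h (ys k) - h (ys (Suc k))\<bar> \<le> Lh * norm (ys (Suc k) - ys k)"
      using Lh(2) y1 y2 by (simp add: norm_minus_commute)
    have "norm (ys (Suc k) - ys k) \<le> 4 * Lh / \<mu> * (lam k / lam (Suc k) - 1)"
      by (rule drift_alg[OF lamS lambda_pos mu_pos norm_ge_zero Lh(1) e1 e2 lip])
    thus ?thesis by (simp add: D_def norm_minus_commute)
  qed
  have gam0: "gam \<longlonglongrightarrow> 0"
  proof -
    have "(\<lambda>k. sqrt ((gam k)\<^sup>2)) \<longlonglongrightarrow> sqrt 0"
      by (intro tendsto_intros summable_LIMSEQ_zero[OF A2d])
    moreover have "(\<lambda>k. sqrt ((gam k)\<^sup>2)) = gam" using gamma_pos by (auto simp: fun_eq_iff less_imp_le)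
    ultimately show ?thesis by simp
  qed
  have cpos: "0 < 2 / (lam 0 * \<mu>)" using lambda_pos[of 0] mu_pos by simp
  obtain N0 where N0: "\<And>k. k \<ge> N0 \<Longrightarrow> gam k < 2 / (lam 0 * \<mu>)"
    using order_tendstoD(2)[OF gam0 cpos] unfolding eventually_sequentially by blast
  define al where "al k = gam (Suc k) * lam (Suc k) * \<mu> / 2" for k
  define a where "a k = al k / 2" for k
  define r where "r k = lam k / lam (Suc k) - 1" for k
  define E where "E k = 1 / ((gam (Suc k))\<^sup>2 * (lam (Suc k))\<^sup>2) * (lam k / lam (Suc k) - 1)\<^sup>2" for k
  define bb where "bb k = a k * (24 * D\<^sup>2 / \<mu>\<^sup>2 * E k + 4 * C / \<mu> * (gam (Suc k) / lam (Suc k)))" for k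
  have alpos: "al k > 0" for k using gamma_pos[of "Suc k"] lambda_pos[of "Suc k"] mu_pos by (simp add: al_def)
  have apos: "a k > 0" for k using alpos[of k] by (simp add: a_def)
  have al1: "al k \<le> 1" if k: "k \<ge> N0" for k
  proof -
    have g: "gam (Suc k) < 2 / (lam 0 * \<mu>)" using N0 k by simp
    have "gam (Suc k) * (lam 0 * \<mu>) < 2" using g lambda_pos[of 0] mu_pos by (simp add: less_divide_eq)
    moreover have "lam (Suc k) * \<mu> \<le> lam 0 * \<mu>" using lam_le mu_pos by (intro mult_right_mono) (auto simp: less_imp_le)
    hence "gam (Suc k) * (lam (Suc k) * \<mu>) \<le> gam (Suc k) * (lam 0 * \<mu>)"
      using gamma_pos by (intro mult_left_mono) (auto simp: less_imp_le)
    ultimately show ?thesis by (simp add: al_def mult.assoc)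
  qed
  have bbeq: "bb k = 3 * (D * r k)\<^sup>2 / al k + C * (gam (Suc k))\<^sup>2" for k
    using gamma_pos[of "Suc k"] lambda_pos[of "Suc k"] mu_pos
    by (simp add: bb_def a_def al_def E_def r_def field_simps power2_eq_square)
  have recur: "a k \<le> 1 \<and> (d (Suc k))\<^sup>2 \<le> (1 - a k) * (d k)\<^sup>2 + bb k" if k: "k \<ge> N0" for k
  proof
    show "a k \<le> 1" using al1[OF k] by (simp add: a_def)
    have tri: "bq (Suc k) \<le> d k + norm (ys k - ys (Suc k))"
      unfolding bq_def d_def
      using norm_triangle_ineq[of "x (Suc k) - ys k" "ys k - ys (Suc k)"] by simp
    have cs: "(d (Suc k))\<^sup>2 \<le> (1 - al k) * (bq (Suc k))\<^sup>2 + C * (gam (Suc k))\<^sup>2"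
      using contr[of "Suc k"] by (simp add: al_def)
    have "(d (Suc k))\<^sup>2 \<le> (1 - al k / 2) * (d k)\<^sup>2 + 3 * (D * r k)\<^sup>2 / al k + C * (gam (Suc k))\<^sup>2"
      by (rule recur_alg[OF alpos al1[OF k] _ norm_ge_zero _ tri _ cs])
         (use drift[of k] in \<open>auto simp: d_def bq_def r_def\<close>)
    thus "(d (Suc k))\<^sup>2 \<le> (1 - a k) * (d k)\<^sup>2 + bb k" by (simp add: bbeq a_def)
  qed
  have ns: "\<not> summable a"
  proof
    assume "summable a"
    moreover have "a = (\<lambda>k. (\<mu>/4) * (gam (Suc k) * lam (Suc k)))"
      by (auto simp: fun_eq_iff a_def al_def)
    ultimately have "summable (\<lambda>k. gam (Suc k) * lam (Suc k))" using mu_pos by simp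
    hence "summable (\<lambda>k. gam k * lam k)" using summable_Suc_iff[of "\<lambda>k. gam k * lam k"] by simp
    with A2b show False by simp
  qed
  have ba: "(\<lambda>k. bb k / a k) \<longlonglongrightarrow> 0"
  proof -
    have E0: "E \<longlonglongrightarrow> 0" using A2e by (simp add: E_def[abs_def])
    have f0: "(\<lambda>k. gam (Suc k) / lam (Suc k)) \<longlonglongrightarrow> 0" using LIMSEQ_Suc[OF A2f] .
    have "(\<lambda>k. 24 * D\<^sup>2 / \<mu>\<^sup>2 * E k + 4 * C / \<mu> * (gam (Suc k) / lam (Suc k))) \<longlonglongrightarrow> 24 * D\<^sup>2 / \<mu>\<^sup>2 * 0 + 4 * C / \<mu> * 0"
      by (intro tendsto_intros E0 f0)
    moreover have "(\<lambda>k. bb k / a k) = (\<lambda>k. 24 * D\<^sup>2 / \<mu>\<^sup>2 * E k + 4 * C / \<mu> * (gam (Suc k) / lam (Suc k)))"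
      using apos by (auto simp: fun_eq_iff bb_def less_imp_neq[symmetric])
    ultimately show ?thesis by simp
  qed
  have u0: "(\<lambda>k. (d k)\<^sup>2) \<longlonglongrightarrow> 0"
    by (rule seq_conv[where a = a and b = bb and Ns = N0]) (use apos ns recur ba in auto)
  have d0: "d \<longlonglongrightarrow> 0"
  proof -
    have "(\<lambda>k. sqrt ((d k)\<^sup>2)) \<longlonglongrightarrow> sqrt 0" by (intro tendsto_intros u0)
    moreover have "(\<lambda>k. sqrt ((d k)\<^sup>2)) = d" by (auto simp: fun_eq_iff d_def)
    ultimately show ?thesis by simp
  qed
  have partA: "(\<lambda>k. norm (x k - the_argmin (\<lambda>y. (\<Sum>i<m. f i y) + lam (k - 1) * h y) X)) \<longlonglongrightarrow> 0"
  proof (rule LIMSEQ_imp_Suc)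
    have "(\<lambda>k. norm (x (Suc k) - the_argmin (\<lambda>y. (\<Sum>i<m. f i y) + lam (Suc k - 1) * h y) X)) = d"
      by (simp add: fun_eq_iff d_def ys_def)
    thus "(\<lambda>k. norm (x (Suc k) - the_argmin (\<lambda>y. (\<Sum>i<m. f i y) + lam (Suc k - 1) * h y) X)) \<longlonglongrightarrow> 0"
      using d0 by simp
  qed
  have partB: "x \<longlonglongrightarrow> the_argmin h (argmin_set (\<lambda>y. \<Sum>i<m. f i y) X)" if lz: "lam \<longlonglongrightarrow> 0"
  proof -
    have ysp: "ys \<longlonglongrightarrow> p"
    proof (rule tikhonov[where F = F and h = h and lam = lam and X = X])
      show "compact X" by (rule X(2))
      show "continuous_on UNIV F" by (rule Fcont)
      show "continuous_on UNIV h" by (rule hcont)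
      show "lam \<longlonglongrightarrow> 0" by (rule lz)
      show "0 < lam k" for k by (rule lambda_pos)
      show "p \<in> argmin_set F X" using pP by (simp add: Xs_def)
    next
      fix k
      have "\<forall>y\<in>X. F (ys k) + lam k * h (ys k) \<le> F y + lam k * h y"
      proof
        fix y assume "y \<in> X"
        hence "F (ys k) + lam k * h (ys k) + 2 * (lam k * \<mu> / 8) * (norm (y - ys k))\<^sup>2 \<le> F y + lam k * h y"
          using ysP[of k] by blast
        moreover have "0 \<le> 2 * (lam k * \<mu> / 8) * (norm (y - ys k))\<^sup>2"
          using lambda_pos[of k] mu_pos by simp
        ultimately show "F (ys k) + lam k * h (ys k) \<le> F y + lam k * h y" by linarith
      qed
      thus "ys k \<in> X \<and> (\<forall>y\<in>X. F (ys k) + lam k * h (ys k) \<le> F y + lam k * h y)" using ysP[of k] by blast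
    next
      fix q assume q: "q \<in> argmin_set F X" "h q \<le> h p"
      have "h p + 2 * (\<mu> / 8) * (norm (q - p))\<^sup>2 \<le> h q" using pP q(1) by (simp add: Xs_def)
      hence "2 * (\<mu> / 8) * (norm (q - p))\<^sup>2 \<le> 0" using q(2) by linarith
      hence "(norm (q - p))\<^sup>2 \<le> 0" using mu_pos by (simp add: mult_le_0_iff)
      thus "q = p" by simp
    qed
    have "(\<lambda>k. x (Suc k) - p) \<longlonglongrightarrow> 0"
    proof (rule Lim_null_comparison[where g = "\<lambda>k. d k + norm (ys k - p)"])
      show "\<forall>\<^sub>F k in sequentially. norm (x (Suc k) - p) \<le> d k + norm (ys k - p)"
        unfolding d_def using norm_triangle_ineq[of "x (Suc k) - ys k" "ys k - p" for k] by simp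
      have "(\<lambda>k. norm (ys k - p)) \<longlonglongrightarrow> norm (p - p)" by (intro tendsto_intros ysp)
      hence "(\<lambda>k. norm (ys k - p)) \<longlonglongrightarrow> 0" by simp
      thus "(\<lambda>k. d k + norm (ys k - p)) \<longlonglongrightarrow> 0" using tendsto_add[OF d0] by fastforce
    qed
    hence "(\<lambda>k. (x (Suc k) - p) + p) \<longlonglongrightarrow> 0 + p" by (intro tendsto_intros)
    hence "(\<lambda>k. x (Suc k)) \<longlonglongrightarrow> p" by simp
    hence "x \<longlonglongrightarrow> p" by (rule LIMSEQ_imp_Suc)
    moreover have "p = the_argmin h (argmin_set (\<lambda>y. \<Sum>i<m. f i y) X)"
      by (simp add: p_def Xs_def F_def[abs_def])
    ultimately show ?thesis by simp
  qed
  show ?thesis using partA partB by blast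
qed
end
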